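(* Let $\Delta$ be a saturated sample set. For every basic term $t$, every valuation $\theta$, and every $\Delta$-diagram $\delta$: if $\theta(x)$ strongly extends $\delta_x$ for every term variable $x$, then $[\![t]\!]_\theta$ strongly extends $\delta_t$.
   Context: Time warps: $\overline{\omega}=\omega\cup\{\omega\}$ with its natural order; a time warp is a monotone $f\colon\overline\omega\to\overline\omega$ with $f(0)=0$, $f(\omega)=\bigvee_{n\in\omega}f(n)$; $W$ is the set of time warps ordered pointwise, $fg:=f\circ g$, $\mathrm{id}$ identity, $\bot$ constant $0$, $\top$ maps $p\neq0$ to $\omega$. Residuals $\backslash,/$ on $W$ satisfy $f\le h/g\iff fg\le h\iff g\le f\backslash h$; $f^{\ell}:=\mathrm{id}/f$, $f^{r}:=f\backslash\mathrm{id}$, $f^{o}:=\top\backslash f$; $\mathrm{last}(f):=\bigwedge\{p\in\overline\omega\mid f(p)=f(\omega)\}$. Basic terms: $t,u::=x\mid tu\mid t^{o}\mid t^{\ell}\mid t^{r}\mid\mathrm{id}\mid\bot$ ($x$ a term variable). A valuation $\theta$ maps term variables to $W$; $[\![x]\!]_\theta=\theta(x)$, $[\![tu]\!]_\theta=[\![t]\!]_\theta[\![u]\!]_\theta$, $[\![t^{\star}]\!]_\theta=([\![t]\!]_\theta)^{\star}$ for $\star\in\{o,\ell,r\}$, $[\![\mathrm{id}]\!]_\theta=\mathrm{id}$, $[\![\bot]\!]_\theta=\bot$. Samples: $\alpha::=\kappa\mid t[\alpha]\mid\mathsf{s}(\alpha)\mid\mathsf{p}(\alpha)\mid\mathsf{last}(t)$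 ($\kappa$ a time variable, $t$ a basic term). Relation $\leadsto$: $t[\alpha]\leadsto\alpha$; $\mathsf{s}(\alpha)\leadsto\alpha$; $\mathsf{p}(\alpha)\leadsto\alpha$; $(tu)[\alpha]\leadsto t[u[\alpha]]$; $t^{o}[\alpha]\leadsto t[\alpha]$; $t^{r}[\alpha]\leadsto t[t^{r}[\alpha]], t[\mathsf{s}(t^{r}[\alpha])]$; $t^{\ell}[\alpha]\leadsto t[t^{\ell}[\alpha]], t[\mathsf{p}(t^{\ell}[\alpha])]$; $t[\alpha]\leadsto t[\mathsf{last}(t)]$. A sample set is saturated if closed under $\leadsto$. For $p\in\overline\omega$: $p\ominus1=p-1$ if $p\in\omega\setminus\{0\}$, else $p$; $p\oplus1=p+1$ if $p\in\omega$, else $p$. For a saturated sample set $\Delta$, a $\Delta$-diagram is a map $\delta\colon\Delta\to\overline\omega$ such that (all samples mentioned belonging to $\Delta$): (S1) $\delta(\alpha)\le\delta(\beta)\Rightarrow\delta(t[\alpha])\le\delta(t[\beta])$; (S2) $\delta(\alpha)=0\Rightarrow\delta(t[\alpha])=0$; (S3) $\delta(\mathsf{p}(\alpha))=\delta(\alpha)\ominus1$; (S4) $\delta(\mathsf{s}(\alpha))=\delta(\alpha)\oplus1$; (S5) for $t[\alpha]\in\Delta$: $\delta(\mathsf{last}(t))\le\delta(\alpha)\iff\delta(t[\alpha])=\delta(t[\mathsf{last}(t)])$; (S6) $\delta(\mathsf{last}(t))=\omega\Rightarrow\delta(t[\mathsf{last}(t)])=\omega$; (L1) $\delta(\mathrm{id}[\alpha])=\delta(\alpha)$;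 (L2) if $\bot[\alpha]\in\Delta$ then $\delta(\mathsf{last}(\bot))=0$; (L3) $\delta((tu)[\alpha])=\delta(t[u[\alpha]])$; (L4) if $(tu)[\mathsf{last}(tu)]\in\Delta$ and $\delta(\mathsf{last}(tu))=\omega$ then $\delta(\mathsf{last}(t))=\delta(\mathsf{last}(u))=\omega$; (O1) $\delta(t^{o}[\alpha])\in\{0,\omega\}$; (O2) $\delta(\alpha)<\omega\Rightarrow(\delta(t^{o}[\alpha])=\omega\iff\delta(t[\alpha])=\omega)$; (O3) $\delta(\mathsf{last}(t^{o}))<\omega$; (O4) for $t[\alpha],t^{o}[\mathsf{last}(t^{o})]\in\Delta$: if $\delta(t^{o}[\mathsf{last}(t^{o})])<\omega$ and $\delta(\alpha)<\omega$ then $\delta(t[\alpha])<\omega$; (R1) $\delta(t[t^{r}[\alpha]])\le\delta(\alpha)$; (R2) for $t^{r}[\alpha]\in\Delta$: if $0<\delta(\alpha)<\omega$ and $\delta(t^{r}[\alpha])<\omega$ then $\delta(\alpha)<\delta(t[\mathsf{s}(t^{r}[\alpha])])$; (R3) for $t^{r}[\mathsf{last}(t^{r})]\in\Delta$: $\delta(\mathsf{last}(t^{r}))=\omega\Rightarrow\delta(\mathsf{last}(t))=\omega$; (R4) for $t^{r}[\mathsf{last}(t^{r})]\in\Delta$: $\delta(t^{r}[\mathsf{last}(t^{r})])<\omega\Rightarrow\delta(t[\mathsf{s}(t^{r}[\mathsf{last}(t^{r})])])=\omega$; (Λ1) for $t[t^{\ell}[\alpha]]\in\Delta$: $\delta(t^{\ell}[\alpha])<\omega\Rightarrow\delta(\alpha)\le\delta(t[t^{\ell}[\alpha]])$;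 (Λ2) for $t^{\ell}[\alpha]\in\Delta$: if $0<\delta(\alpha)<\omega$ and $\delta(t^{\ell}[\alpha])<\omega$ then $\delta(t[\mathsf{p}(t^{\ell}[\alpha])])<\delta(\alpha)$; (Λ3) for $t[t^{\ell}[\alpha]]\in\Delta$: if $\delta(\alpha)<\omega$ and $\delta(t^{\ell}[\alpha])=\omega$ then $\delta(t[t^{\ell}[\alpha]])<\delta(\alpha)$; (Λ4) for $t^{\ell}[\mathsf{last}(t^{\ell})]\in\Delta$: $\delta(\mathsf{last}(t^{\ell}))=\omega\Rightarrow\delta(\mathsf{last}(t))=\omega$; (Λ5) for $t^{\ell}[\mathsf{last}(t^{\ell})]\in\Delta$: $\delta(t^{\ell}[\mathsf{last}(t^{\ell})])<\omega\Rightarrow\delta(t[t^{\ell}[\mathsf{last}(t^{\ell})]])=\omega$. For a $\Delta$-diagram $\delta$ and basic term $t$, let $\delta_t:=\{(\delta(\alpha),\delta(t[\alpha]))\mid t[\alpha]\in\Delta\}$. A time warp $f$ extends $\delta_t$ if $f(i)=j$ for all $(i,j)\in\delta_t$, and strongly extends $\delta_t$ if moreover either $\delta_t=\emptyset$, or ($\delta_t\ne\emptyset$ and $\delta(\mathsf{last}(t))=\omega$ implies $\mathrm{last}(f)=\omega$). *)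

theory Defs
  imports "HOL-Library.Extended_Nat"
begin

section \<open>Time warps on \<open>\<omega>\<close>-bar (rendered as enat, with \<infinity> for \<omega>)\<close>

definition time_warp :: "(enat \<Rightarrow> enat) \<Rightarrow> bool" where
  "time_warp f \<longleftrightarrow> mono f \<and> f 0 = 0 \<and> f \<infinity> = (SUP n. f (enat n))"

definition W :: "(enat \<Rightarrow> enat) set" where
  "W = {f. time_warp f}"

definition top_w :: "enat \<Rightarrow> enat" where
  "top_w p = (if p = 0 then 0 else \<infinity>)"

definition bot_w :: "enat \<Rightarrow> enat" where
  "bot_w p = 0"

text \<open>Residuals in W (pointwise order, composition as multiplication):
  h / g is the greatest f in W with f \<circ> g \<le> h; f \ h is the greatest g in W with f \<circ> g \<le> h.
  They are given by pointwise suprema, W being closed under pointwise suprema.\<close>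

definition rres :: "(enat \<Rightarrow> enat) \<Rightarrow> (enat \<Rightarrow> enat) \<Rightarrow> (enat \<Rightarrow> enat)" where
  "rres h g = (\<lambda>p. SUP f \<in> {f \<in> W. f \<circ> g \<le> h}. f p)"

definition lres :: "(enat \<Rightarrow> enat) \<Rightarrow> (enat \<Rightarrow> enat) \<Rightarrow> (enat \<Rightarrow> enat)" where
  "lres f h = (\<lambda>p. SUP g \<in> {g \<in> W. f \<circ> g \<le> h}. g p)"

definition ladj :: "(enat \<Rightarrow> enat) \<Rightarrow> (enat \<Rightarrow> enat)" where
  "ladj f = rres id f"

definition radj :: "(enat \<Rightarrow> enat) \<Rightarrow> (enat \<Rightarrow> enat)" where
  "radj f = lres f id"

definition ores :: "(enat \<Rightarrow> enat) \<Rightarrow> (enat \<Rightarrow> enat)" where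
  "ores f = lres top_w f"

definition lastw :: "(enat \<Rightarrow> enat) \<Rightarrow> enat" where
  "lastw f = Inf {p. f p = f \<infinity>}"

datatype 'v bterm =
    BVar 'v
  | BComp "'v bterm" "'v bterm"
  | BO "'v bterm"
  | BL "'v bterm"
  | BR "'v bterm"
  | BId
  | BBot

primrec eval :: "('v \<Rightarrow> (enat \<Rightarrow> enat)) \<Rightarrow> 'v bterm \<Rightarrow> (enat \<Rightarrow> enat)" where
  "eval \<theta> (BVar x) = \<theta> x"
| "eval \<theta> (BComp t u) = eval \<theta> t \<circ> eval \<theta> u"
| "eval \<theta> (BO t) = ores (eval \<theta> t)"
| "eval \<theta> (BL t) = ladj (eval \<theta> t)"
| "eval \<theta> (BR t) = radj (eval \<theta> t)"
| "eval \<theta> BId = id"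
| "eval \<theta> BBot = bot_w"

datatype ('k, 'v) sample =
    SVar 'k
  | SApp "'v bterm" "('k, 'v) sample"
  | SS "('k, 'v) sample"
  | SP "('k, 'v) sample"
  | SLast "'v bterm"

inductive leadsto :: "('k, 'v) sample \<Rightarrow> ('k, 'v) sample \<Rightarrow> bool" where
  "leadsto (SApp t a) a"
| "leadsto (SS a) a"
| "leadsto (SP a) a"
| "leadsto (SApp (BComp t u) a) (SApp t (SApp u a))"
| "leadsto (SApp (BO t) a) (SApp t a)"
| "leadsto (SApp (BR t) a) (SApp t (SApp (BR t) a))"
| "leadsto (SApp (BR t) a) (SApp t (SS (SApp (BR t) a)))"
| "leadsto (SApp (BL t) a) (SApp t (SApp (BL t) a))"
| "leadsto (SApp (BL t) a) (SApp t (SP (SApp (BL t) a)))"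
| "leadsto (SApp t a) (SApp t (SLast t))"

definition saturated :: "('k, 'v) sample set \<Rightarrow> bool" where
  "saturated D \<longleftrightarrow> (\<forall>a b. a \<in> D \<longrightarrow> leadsto a b \<longrightarrow> b \<in> D)"

definition ominus1 :: "enat \<Rightarrow> enat" where
  "ominus1 p = (if p \<noteq> 0 \<and> p \<noteq> \<infinity> then p - 1 else p)"

definition oplus1 :: "enat \<Rightarrow> enat" where
  "oplus1 p = (if p \<noteq> \<infinity> then p + 1 else p)"

text \<open>A D-diagram: a map from samples to enat (only its values on D matter), subject to the
  conditions (S1)-(S6), (L1)-(L4), (O1)-(O4), (R1)-(R4), (\<Lambda>1)-(\<Lambda>5), where every sample
  mentioned in a condition is required to belong to D.\<close>

definition diagram :: "('k, 'v) sample set \<Rightarrow> (('k, 'v) sample \<Rightarrow> enat) \<Rightarrow> bool" where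
  "diagram D \<delta> \<longleftrightarrow>
    \<comment> \<open>S1\<close>
    (\<forall>t a b. a \<in> D \<and> b \<in> D \<and> SApp t a \<in> D \<and> SApp t b \<in> D \<and> \<delta> a \<le> \<delta> b
        \<longrightarrow> \<delta> (SApp t a) \<le> \<delta> (SApp t b)) \<and>
    \<comment> \<open>S2\<close>
    (\<forall>t a. a \<in> D \<and> SApp t a \<in> D \<and> \<delta> a = 0 \<longrightarrow> \<delta> (SApp t a) = 0) \<and>
    \<comment> \<open>S3\<close>
    (\<forall>a. a \<in> D \<and> SP a \<in> D \<longrightarrow> \<delta> (SP a) = ominus1 (\<delta> a)) \<and>
    \<comment> \<open>S4\<close>
    (\<forall>a. a \<in> D \<and> SS a \<in> D \<longrightarrow> \<delta> (SS a) = oplus1 (\<delta> a)) \<and>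
    \<comment> \<open>S5\<close>
    (\<forall>t a. a \<in> D \<and> SApp t a \<in> D \<and> SLast t \<in> D \<and> SApp t (SLast t) \<in> D \<longrightarrow>
        (\<delta> (SLast t) \<le> \<delta> a \<longleftrightarrow> \<delta> (SApp t a) = \<delta> (SApp t (SLast t)))) \<and>
    \<comment> \<open>S6\<close>
    (\<forall>t. SLast t \<in> D \<and> SApp t (SLast t) \<in> D \<and> \<delta> (SLast t) = \<infinity> \<longrightarrow>
        \<delta> (SApp t (SLast t)) = \<infinity>) \<and>
    \<comment> \<open>L1\<close>
    (\<forall>a. a \<in> D \<and> SApp BId a \<in> D \<longrightarrow> \<delta> (SApp BId a) = \<delta> a) \<and>
    \<comment> \<open>L2\<close>
    (\<forall>a. SApp BBot a \<in> D \<and> SLast BBot \<in> D \<longrightarrow> \<delta> (SLast BBot) = 0) \<and>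
    \<comment> \<open>L3\<close>
    (\<forall>t u a. SApp (BComp t u) a \<in> D \<and> SApp t (SApp u a) \<in> D \<longrightarrow>
        \<delta> (SApp (BComp t u) a) = \<delta> (SApp t (SApp u a))) \<and>
    \<comment> \<open>L4\<close>
    (\<forall>t u. SApp (BComp t u) (SLast (BComp t u)) \<in> D \<and> SLast (BComp t u) \<in> D \<and>
        SLast t \<in> D \<and> SLast u \<in> D \<and> \<delta> (SLast (BComp t u)) = \<infinity> \<longrightarrow>
        \<delta> (SLast t) = \<infinity> \<and> \<delta> (SLast u) = \<infinity>) \<and>
    \<comment> \<open>O1\<close>
    (\<forall>t a. SApp (BO t) a \<in> D \<longrightarrow> \<delta> (SApp (BO t) a) \<in> {0, \<infinity>}) \<and>
    \<comment> \<open>O2\<close>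
    (\<forall>t a. a \<in> D \<and> SApp (BO t) a \<in> D \<and> SApp t a \<in> D \<and> \<delta> a < \<infinity> \<longrightarrow>
        (\<delta> (SApp (BO t) a) = \<infinity> \<longleftrightarrow> \<delta> (SApp t a) = \<infinity>)) \<and>
    \<comment> \<open>O3\<close>
    (\<forall>t. SLast (BO t) \<in> D \<longrightarrow> \<delta> (SLast (BO t)) < \<infinity>) \<and>
    \<comment> \<open>O4\<close>
    (\<forall>t a. a \<in> D \<and> SApp t a \<in> D \<and> SApp (BO t) (SLast (BO t)) \<in> D \<and>
        \<delta> (SApp (BO t) (SLast (BO t))) < \<infinity> \<and> \<delta> a < \<infinity> \<longrightarrow> \<delta> (SApp t a) < \<infinity>) \<and>
    \<comment> \<open>R1\<close>
    (\<forall>t a. a \<in> D \<and> SApp t (SApp (BR t) a) \<in> D \<longrightarrow>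
        \<delta> (SApp t (SApp (BR t) a)) \<le> \<delta> a) \<and>
    \<comment> \<open>R2\<close>
    (\<forall>t a. a \<in> D \<and> SApp (BR t) a \<in> D \<and> SApp t (SS (SApp (BR t) a)) \<in> D \<and>
        0 < \<delta> a \<and> \<delta> a < \<infinity> \<and> \<delta> (SApp (BR t) a) < \<infinity> \<longrightarrow>
        \<delta> a < \<delta> (SApp t (SS (SApp (BR t) a)))) \<and>
    \<comment> \<open>R3\<close>
    (\<forall>t. SApp (BR t) (SLast (BR t)) \<in> D \<and> SLast (BR t) \<in> D \<and> SLast t \<in> D \<and>
        \<delta> (SLast (BR t)) = \<infinity> \<longrightarrow> \<delta> (SLast t) = \<infinity>) \<and>
    \<comment> \<open>R4\<close>
    (\<forall>t. SApp (BR t) (SLast (BR t)) \<in> D \<and>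
        SApp t (SS (SApp (BR t) (SLast (BR t)))) \<in> D \<and>
        \<delta> (SApp (BR t) (SLast (BR t))) < \<infinity> \<longrightarrow>
        \<delta> (SApp t (SS (SApp (BR t) (SLast (BR t))))) = \<infinity>) \<and>
    \<comment> \<open>\<Lambda>1\<close>
    (\<forall>t a. a \<in> D \<and> SApp (BL t) a \<in> D \<and> SApp t (SApp (BL t) a) \<in> D \<and>
        \<delta> (SApp (BL t) a) < \<infinity> \<longrightarrow> \<delta> a \<le> \<delta> (SApp t (SApp (BL t) a))) \<and>
    \<comment> \<open>\<Lambda>2\<close>
    (\<forall>t a. a \<in> D \<and> SApp (BL t) a \<in> D \<and> SApp t (SP (SApp (BL t) a)) \<in> D \<and>
        0 < \<delta> a \<and> \<delta> a < \<infinity> \<and> \<delta> (SApp (BL t) a) < \<infinity> \<longrightarrow>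
        \<delta> (SApp t (SP (SApp (BL t) a))) < \<delta> a) \<and>
    \<comment> \<open>\<Lambda>3\<close>
    (\<forall>t a. a \<in> D \<and> SApp (BL t) a \<in> D \<and> SApp t (SApp (BL t) a) \<in> D \<and>
        \<delta> a < \<infinity> \<and> \<delta> (SApp (BL t) a) = \<infinity> \<longrightarrow> \<delta> (SApp t (SApp (BL t) a)) < \<delta> a) \<and>
    \<comment> \<open>\<Lambda>4\<close>
    (\<forall>t. SApp (BL t) (SLast (BL t)) \<in> D \<and> SLast (BL t) \<in> D \<and> SLast t \<in> D \<and>
        \<delta> (SLast (BL t)) = \<infinity> \<longrightarrow> \<delta> (SLast t) = \<infinity>) \<and>
    \<comment> \<open>\<Lambda>5\<close>
    (\<forall>t. SApp (BL t) (SLast (BL t)) \<in> D \<and> SApp t (SApp (BL t) (SLast (BL t))) \<in> D \<and>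
        \<delta> (SApp (BL t) (SLast (BL t))) < \<infinity> \<longrightarrow>
        \<delta> (SApp t (SApp (BL t) (SLast (BL t)))) = \<infinity>)"

definition delta_t :: "('k, 'v) sample set \<Rightarrow> (('k, 'v) sample \<Rightarrow> enat) \<Rightarrow> 'v bterm \<Rightarrow> (enat \<times> enat) set" where
  "delta_t D \<delta> t = {(\<delta> a, \<delta> (SApp t a)) | a. SApp t a \<in> D}"

definition extends :: "(enat \<Rightarrow> enat) \<Rightarrow> (enat \<times> enat) set \<Rightarrow> bool" where
  "extends f R \<longleftrightarrow> (\<forall>(i, j) \<in> R. f i = j)"

definition strongly_extends ::
  "(enat \<Rightarrow> enat) \<Rightarrow> ('k, 'v) sample set \<Rightarrow> (('k, 'v) sample \<Rightarrow> enat) \<Rightarrow> 'v bterm \<Rightarrow> bool" where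
  "strongly_extends f D \<delta> t \<longleftrightarrow> time_warp f \<and> extends f (delta_t D \<delta> t) \<and>
     (delta_t D \<delta> t = {} \<or> (delta_t D \<delta> t \<noteq> {} \<and> (\<delta> (SLast t) = \<infinity> \<longrightarrow> lastw f = \<infinity>)))"

end

theory Submission
  imports Defs
begin

lemma enat_all_le_inf: "(\<And>q. enat q \<le> (y::enat)) \<Longrightarrow> y = \<infinity>"
  by (metis enat_ord_simps(2) lessI not_infinity_eq not_le)

lemma tw_mono: "time_warp f \<Longrightarrow> x \<le> y \<Longrightarrow> f x \<le> f y"
  unfolding time_warp_def by (auto dest: monoD)

lemma tw_0: "time_warp f \<Longrightarrow> f 0 = 0"
  unfolding time_warp_def by auto

lemma tw_inf: "time_warp f \<Longrightarrow> f \<infinity> = (SUP n. f (enat n))"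
  unfolding time_warp_def by auto

lemma tw_Sup:
  assumes tw: "time_warp f"
  shows "f (Sup A) = (SUP a\<in>A. f a)"
proof (cases "A = {}")
  case True then show ?thesis using tw_0[OF tw] by (simp add: bot_enat_def)
next
  case ne: False
  show ?thesis
  proof (cases "finite A")
    case True
    then have "Sup A = Max A" using ne by (simp add: Sup_enat_def)
    moreover have "Max A \<in> A" using True ne by simp
    ultimately have "Sup A \<in> A" by simp
    then show ?thesis
      by (metis (no_types, lifting) SUP_least SUP_upper Sup_upper antisym tw tw_mono)
  next
    case False
    then have S: "Sup A = \<infinity>" using ne by (simp add: Sup_enat_def)
    have "f (enat n) \<le> (SUP a\<in>A. f a)" for n
    proof -
      obtain a where "a \<in> A" "enat n \<le> a"
        using False finite_enat_bounded[of A n] by (meson linear)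
      then show ?thesis by (meson SUP_upper2 tw tw_mono)
    qed
    then have "f \<infinity> \<le> (SUP a\<in>A. f a)" using tw_inf[OF tw] by (simp add: SUP_least)
    moreover have "(SUP a\<in>A. f a) \<le> f \<infinity>" by (simp add: SUP_least tw tw_mono)
    ultimately show ?thesis using S by simp
  qed
qed

lemma tw_comp: "time_warp f \<Longrightarrow> time_warp g \<Longrightarrow> time_warp (f \<circ> g)"
  unfolding time_warp_def
  apply (intro conjI)
    apply (simp add: mono_def)
   apply simp
  apply (simp add: tw_Sup[unfolded time_warp_def] image_image)
  done

lemma Sup_range_enat: "Sup (range enat) = \<infinity>"
  by (rule enat_all_le_inf) (simp add: Sup_upper)

lemma tw_id: "time_warp id"
  unfolding time_warp_def mono_def
  by (simp add: Sup_range_enat)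

lemma tw_bot: "time_warp bot_w"
  unfolding time_warp_def mono_def bot_w_def by simp

lemma tw_top: "time_warp top_w"
  unfolding time_warp_def
proof (intro conjI)
  show "mono top_w" unfolding top_w_def by (auto intro!: monoI simp: le_zero_eq)
  show "top_w 0 = 0" by (simp add: top_w_def)
  have "top_w (enat 1) \<le> (SUP n. top_w (enat n))" by (rule SUP_upper) simp
  then show "top_w \<infinity> = (SUP n. top_w (enat n))" by (simp add: top_w_def zero_enat_def)
qed

lemma tw_SUP:
  assumes "\<And>g. g \<in> S \<Longrightarrow> time_warp g"
  shows "time_warp (\<lambda>p. SUP g\<in>S. g p)"
  unfolding time_warp_def
proof (intro conjI)
  show "mono (\<lambda>p. SUP g\<in>S. g p)"
    by (rule monoI, rule SUP_mono) (meson assms tw_mono order.refl)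
  have "(SUP g\<in>S. g 0) = (SUP g\<in>S. (0::enat))" by (rule SUP_cong) (auto simp: assms tw_0)
  then show "(SUP g\<in>S. g 0) = 0" by (cases "S = {}") (simp_all add: bot_enat_def)
  have "(SUP g\<in>S. g \<infinity>) = (SUP g\<in>S. SUP n. g (enat n))"
    using assms tw_inf by (metis (mono_tags, lifting) SUP_cong)
  also have "\<dots> = (SUP n. SUP g\<in>S. g (enat n))" by (rule SUP_commute)
  finally show "(SUP g\<in>S. g \<infinity>) = (SUP n. SUP g\<in>S. g (enat n))" .
qed

lemma W_iff: "f \<in> W \<longleftrightarrow> time_warp f" by (simp add: W_def)

lemma tw_lres: "time_warp (lres f h)"
  unfolding lres_def by (rule tw_SUP) (simp add: W_def)

lemma tw_rres: "time_warp (rres h g)"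
  unfolding rres_def by (rule tw_SUP) (simp add: W_def)

lemma lres_upper: "time_warp g \<Longrightarrow> f \<circ> g \<le> h \<Longrightarrow> g p \<le> lres f h p"
  unfolding lres_def by (rule SUP_upper) (simp add: W_def)

lemma rres_upper: "time_warp f \<Longrightarrow> f \<circ> g \<le> h \<Longrightarrow> f p \<le> rres h g p"
  unfolding rres_def by (rule SUP_upper) (simp add: W_def)

lemma lres_below:
  assumes "time_warp f" shows "f (lres f h p) \<le> h p"
proof -
  have "f (lres f h p) = (SUP g\<in>{g \<in> W. f \<circ> g \<le> h}. f (g p))"
    unfolding lres_def using tw_Sup[OF assms] by (simp add: image_image)
  also have "\<dots> \<le> h p" by (rule SUP_least) (auto simp: le_fun_def)
  finally show ?thesis .
qed

lemma rres_below: "rres h g (g p) \<le> h p"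
  unfolding rres_def by (rule SUP_least) (auto simp: le_fun_def)

definition stepf :: "enat \<Rightarrow> enat \<Rightarrow> enat \<Rightarrow> enat" where
  "stepf p x = (\<lambda>r. if p \<le> r then x else 0)"

lemma tw_stepf:
  assumes "0 < p" "p < \<infinity>" shows "time_warp (stepf p x)"
proof -
  obtain k where k: "p = enat k" using assms by (cases p) auto
  have "(SUP n. stepf p x (enat n)) = x"
  proof (rule antisym)
    show "(SUP n. stepf p x (enat n)) \<le> x" by (rule SUP_least) (simp add: stepf_def)
    show "x \<le> (SUP n. stepf p x (enat n))" by (rule SUP_upper2[of k]) (auto simp: stepf_def k)
  qed
  then show ?thesis using assms unfolding time_warp_def stepf_def mono_def
    by (auto simp: k)
qed



lemma R_G1: "time_warp f \<Longrightarrow> f (radj f p) \<le> p"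
  unfolding radj_def using lres_below[of f id p] by simp

lemma R_G2:
  assumes tw: "time_warp f" and p: "0 < p" "p < \<infinity>" and q: "f q \<le> p"
  shows "q \<le> radj f p"
proof -
  have "f \<circ> stepf p q \<le> id"
    unfolding le_fun_def stepf_def using q tw_0[OF tw] by (auto intro: order.trans)
  from lres_upper[OF tw_stepf[OF p] this, of p] show ?thesis
    by (simp add: radj_def stepf_def)
qed

lemma L_G1: "ladj f (f q) \<le> q"
  unfolding ladj_def using rres_below[of id f q] by simp

lemma L_G2:
  assumes tw: "time_warp f" and p: "0 < p" "p < \<infinity>" and x: "\<And>s. p \<le> f s \<Longrightarrow> x \<le> s"
  shows "x \<le> ladj f p"
proof -
  have "stepf p x \<circ> f \<le> id"
    unfolding le_fun_def stepf_def using x by auto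
  from rres_upper[OF tw_stepf[OF p] this, of p] show ?thesis
    by (simp add: ladj_def stepf_def)
qed

lemma O_G1:
  assumes tw: "time_warp f" and "ores f p \<noteq> 0" shows "f p = \<infinity>"
  using lres_below[OF tw_top, of f p] assms(2) by (simp add: ores_def top_w_def split: if_splits)

lemma O_G2:
  assumes tw: "time_warp f" and p: "p < \<infinity>" and fp: "f p = \<infinity>"
  shows "ores f p = \<infinity>"
proof -
  have p0: "0 < p" using fp tw_0[OF tw] by (cases "p = 0") (auto simp: zero_less_iff_neq_zero)
  have r: "f r = \<infinity>" if "p \<le> r" for r
    using tw_mono[OF tw, of p r] fp that by (cases "f r") auto
  have "top_w \<circ> stepf p \<infinity> \<le> f"
    unfolding le_fun_def stepf_def top_w_def
    using r by auto
  from lres_upper[OF tw_stepf[OF p0 p] this, of p] show ?thesis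
    by (simp add: ores_def stepf_def)
qed

lemma lastw_inf_D:
  assumes tw: "time_warp f" and l: "lastw f = \<infinity>"
  shows "f \<infinity> = \<infinity>" "f (enat n) < \<infinity>"
proof -
  have ne: "f (enat m) \<noteq> f \<infinity>" for m
  proof
    assume "f (enat m) = f \<infinity>"
    then have "lastw f \<le> enat m" unfolding lastw_def by (simp add: Inf_lower)
    with l show False by simp
  qed
  have lt: "f (enat m) < f \<infinity>" for m
    using ne[of m] tw_mono[OF tw, of "enat m" \<infinity>] by (simp add: order_less_le)
  show inf: "f \<infinity> = \<infinity>"
  proof (rule ccontr)
    assume "f \<infinity> \<noteq> \<infinity>"
    then obtain c where c: "f \<infinity> = enat c" by auto
    have "f (enat m) \<le> enat (c - 1)" for m
      using lt[of m] c by (cases "f (enat m)") auto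
    then have "f \<infinity> \<le> enat (c - 1)" using tw_inf[OF tw] by (simp add: SUP_least)
    moreover have "0 < c" using lt[of 0] c tw_0[OF tw] by (simp add: zero_enat_def)
    ultimately show False using c by simp
  qed
  show "f (enat n) < \<infinity>" using lt[of n] inf by simp
qed

lemma lastw_inf_I:
  assumes "\<And>n. g (enat n) < g \<infinity>" shows "lastw g = \<infinity>"
proof -
  have "\<infinity> \<le> lastw g" unfolding lastw_def
  proof (rule Inf_greatest)
    fix p assume "p \<in> {p. g p = g \<infinity>}"
    then show "\<infinity> \<le> p" using assms by (cases p) (auto, metis assms less_irrefl)
  qed
  then show ?thesis by simp
qed

lemma tw_unbounded:
  assumes tw: "time_warp f" and "f \<infinity> = \<infinity>"
  shows "\<exists>q. enat c < f (enat q)"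
proof -
  have "(SUP n. f (enat n)) = top" using assms tw_inf[OF tw] by (simp add: top_enat_def)
  then have "\<forall>x<top. \<exists>i. x < f (enat i)" unfolding SUP_eq_top_iff by simp
  then show ?thesis by (simp add: top_enat_def)
qed


lemma strongly_extends_iff:
  "strongly_extends f D \<delta> t \<longleftrightarrow> time_warp f \<and> (\<forall>a. SApp t a \<in> D \<longrightarrow> f (\<delta> a) = \<delta> (SApp t a)) \<and>
     ((\<exists>a. SApp t a \<in> D) \<longrightarrow> \<delta> (SLast t) = \<infinity> \<longrightarrow> lastw f = \<infinity>)"
  unfolding strongly_extends_def extends_def delta_t_def by auto

locale dsetup =
  fixes D :: "('k, 'v) sample set" and \<delta> :: "('k, 'v) sample \<Rightarrow> enat"
  assumes sat: "saturated D" and dg: "diagram D \<delta>"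
begin

lemma lt: "leadsto a b \<Longrightarrow> a \<in> D \<Longrightarrow> b \<in> D"
  using sat unfolding saturated_def by blast

lemma sat_arg: "SApp t a \<in> D \<Longrightarrow> a \<in> D" by (rule lt) (rule leadsto.intros)
lemma sat_SS: "SS a \<in> D \<Longrightarrow> a \<in> D" by (rule lt) (rule leadsto.intros)
lemma sat_SP: "SP a \<in> D \<Longrightarrow> a \<in> D" by (rule lt) (rule leadsto.intros)
lemma sat_comp: "SApp (BComp t u) a \<in> D \<Longrightarrow> SApp t (SApp u a) \<in> D" by (rule lt) (rule leadsto.intros)
lemma sat_O: "SApp (BO t) a \<in> D \<Longrightarrow> SApp t a \<in> D" by (rule lt) (rule leadsto.intros)
lemma sat_R1: "SApp (BR t) a \<in> D \<Longrightarrow> SApp t (SApp (BR t) a) \<in> D" by (rule lt) (rule leadsto.intros)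
lemma sat_R2: "SApp (BR t) a \<in> D \<Longrightarrow> SApp t (SS (SApp (BR t) a)) \<in> D" by (rule lt) (rule leadsto.intros)
lemma sat_L1: "SApp (BL t) a \<in> D \<Longrightarrow> SApp t (SApp (BL t) a) \<in> D" by (rule lt) (rule leadsto.intros)
lemma sat_L2: "SApp (BL t) a \<in> D \<Longrightarrow> SApp t (SP (SApp (BL t) a)) \<in> D" by (rule lt) (rule leadsto.intros)
lemma sat_last: "SApp t a \<in> D \<Longrightarrow> SApp t (SLast t) \<in> D" by (rule lt) (rule leadsto.intros)
lemma sat_last': "SApp t a \<in> D \<Longrightarrow> SLast t \<in> D" using sat_last sat_arg by blast

lemma S2: "a \<in> D \<Longrightarrow> SApp t a \<in> D \<Longrightarrow> \<delta> a = 0 \<Longrightarrow> \<delta> (SApp t a) = 0"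
  using dg[unfolded diagram_def, THEN conjunct2, THEN conjunct1] by blast
lemma S3: "a \<in> D \<Longrightarrow> SP a \<in> D \<Longrightarrow> \<delta> (SP a) = ominus1 (\<delta> a)"
  using dg[unfolded diagram_def, THEN conjunct2, THEN conjunct2, THEN conjunct1] by blast
lemma S4: "a \<in> D \<Longrightarrow> SS a \<in> D \<Longrightarrow> \<delta> (SS a) = oplus1 (\<delta> a)"
  using dg[unfolded diagram_def, THEN conjunct2, THEN conjunct2, THEN conjunct2, THEN conjunct1] by blast
lemma S5: "a \<in> D \<Longrightarrow> SApp t a \<in> D \<Longrightarrow> SLast t \<in> D \<Longrightarrow> SApp t (SLast t) \<in> D \<Longrightarrow>
        (\<delta> (SLast t) \<le> \<delta> a \<longleftrightarrow> \<delta> (SApp t a) = \<delta> (SApp t (SLast t)))"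
  using dg[unfolded diagram_def, THEN conjunct2, THEN conjunct2, THEN conjunct2, THEN conjunct2, THEN conjunct1] by blast
lemma L1: "a \<in> D \<Longrightarrow> SApp BId a \<in> D \<Longrightarrow> \<delta> (SApp BId a) = \<delta> a"
  using dg[unfolded diagram_def, THEN conjunct2, THEN conjunct2, THEN conjunct2, THEN conjunct2, THEN conjunct2, THEN conjunct2, THEN conjunct1] by blast
lemma L2: "SApp BBot a \<in> D \<Longrightarrow> SLast BBot \<in> D \<Longrightarrow> \<delta> (SLast BBot) = 0"
  using dg[unfolded diagram_def, THEN conjunct2, THEN conjunct2, THEN conjunct2, THEN conjunct2, THEN conjunct2, THEN conjunct2, THEN conjunct2, THEN conjunct1] by blast
lemma L3: "SApp (BComp t u) a \<in> D \<Longrightarrow> SApp t (SApp u a) \<in> D \<Longrightarrow>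
        \<delta> (SApp (BComp t u) a) = \<delta> (SApp t (SApp u a))"
  using dg[unfolded diagram_def, THEN conjunct2, THEN conjunct2, THEN conjunct2, THEN conjunct2, THEN conjunct2, THEN conjunct2, THEN conjunct2, THEN conjunct2, THEN conjunct1] by blast
lemma L4: "SApp (BComp t u) (SLast (BComp t u)) \<in> D \<Longrightarrow> SLast (BComp t u) \<in> D \<Longrightarrow>
        SLast t \<in> D \<Longrightarrow> SLast u \<in> D \<Longrightarrow> \<delta> (SLast (BComp t u)) = \<infinity> \<Longrightarrow>
        \<delta> (SLast t) = \<infinity> \<and> \<delta> (SLast u) = \<infinity>"
  using dg[unfolded diagram_def, THEN conjunct2, THEN conjunct2, THEN conjunct2, THEN conjunct2, THEN conjunct2, THEN conjunct2, THEN conjunct2, THEN conjunct2, THEN conjunct2, THEN conjunct1] by blast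
lemma O1: "SApp (BO t) a \<in> D \<Longrightarrow> \<delta> (SApp (BO t) a) \<in> {0, \<infinity>}"
  using dg[unfolded diagram_def, THEN conjunct2, THEN conjunct2, THEN conjunct2, THEN conjunct2, THEN conjunct2, THEN conjunct2, THEN conjunct2, THEN conjunct2, THEN conjunct2, THEN conjunct2, THEN conjunct1] by blast
lemma O2: "a \<in> D \<Longrightarrow> SApp (BO t) a \<in> D \<Longrightarrow> SApp t a \<in> D \<Longrightarrow> \<delta> a < \<infinity> \<Longrightarrow>
        (\<delta> (SApp (BO t) a) = \<infinity> \<longleftrightarrow> \<delta> (SApp t a) = \<infinity>)"
  using dg[unfolded diagram_def, THEN conjunct2, THEN conjunct2, THEN conjunct2, THEN conjunct2, THEN conjunct2, THEN conjunct2, THEN conjunct2, THEN conjunct2, THEN conjunct2, THEN conjunct2, THEN conjunct2, THEN conjunct1] by blast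
lemma O3: "SLast (BO t) \<in> D \<Longrightarrow> \<delta> (SLast (BO t)) < \<infinity>"
  using dg[unfolded diagram_def, THEN conjunct2, THEN conjunct2, THEN conjunct2, THEN conjunct2, THEN conjunct2, THEN conjunct2, THEN conjunct2, THEN conjunct2, THEN conjunct2, THEN conjunct2, THEN conjunct2, THEN conjunct2, THEN conjunct1] by blast
lemma O4: "a \<in> D \<Longrightarrow> SApp t a \<in> D \<Longrightarrow> SApp (BO t) (SLast (BO t)) \<in> D \<Longrightarrow>
        \<delta> (SApp (BO t) (SLast (BO t))) < \<infinity> \<Longrightarrow> \<delta> a < \<infinity> \<Longrightarrow> \<delta> (SApp t a) < \<infinity>"
  using dg[unfolded diagram_def, THEN conjunct2, THEN conjunct2, THEN conjunct2, THEN conjunct2, THEN conjunct2, THEN conjunct2, THEN conjunct2, THEN conjunct2, THEN conjunct2, THEN conjunct2, THEN conjunct2, THEN conjunct2, THEN conjunct2, THEN conjunct1] by blast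
lemma R1: "a \<in> D \<Longrightarrow> SApp t (SApp (BR t) a) \<in> D \<Longrightarrow>
        \<delta> (SApp t (SApp (BR t) a)) \<le> \<delta> a"
  using dg[unfolded diagram_def, THEN conjunct2, THEN conjunct2, THEN conjunct2, THEN conjunct2, THEN conjunct2, THEN conjunct2, THEN conjunct2, THEN conjunct2, THEN conjunct2, THEN conjunct2, THEN conjunct2, THEN conjunct2, THEN conjunct2, THEN conjunct2, THEN conjunct1] by blast
lemma R2: "a \<in> D \<Longrightarrow> SApp (BR t) a \<in> D \<Longrightarrow> SApp t (SS (SApp (BR t) a)) \<in> D \<Longrightarrow>
        0 < \<delta> a \<Longrightarrow> \<delta> a < \<infinity> \<Longrightarrow> \<delta> (SApp (BR t) a) < \<infinity> \<Longrightarrow>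
        \<delta> a < \<delta> (SApp t (SS (SApp (BR t) a)))"
  using dg[unfolded diagram_def, THEN conjunct2, THEN conjunct2, THEN conjunct2, THEN conjunct2, THEN conjunct2, THEN conjunct2, THEN conjunct2, THEN conjunct2, THEN conjunct2, THEN conjunct2, THEN conjunct2, THEN conjunct2, THEN conjunct2, THEN conjunct2, THEN conjunct2, THEN conjunct1] by blast
lemma R3: "SApp (BR t) (SLast (BR t)) \<in> D \<Longrightarrow> SLast (BR t) \<in> D \<Longrightarrow> SLast t \<in> D \<Longrightarrow>
        \<delta> (SLast (BR t)) = \<infinity> \<Longrightarrow> \<delta> (SLast t) = \<infinity>"
  using dg[unfolded diagram_def, THEN conjunct2, THEN conjunct2, THEN conjunct2, THEN conjunct2, THEN conjunct2, THEN conjunct2, THEN conjunct2, THEN conjunct2, THEN conjunct2, THEN conjunct2, THEN conjunct2, THEN conjunct2, THEN conjunct2, THEN conjunct2, THEN conjunct2, THEN conjunct2, THEN conjunct1] by blast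
lemma R4: "SApp (BR t) (SLast (BR t)) \<in> D \<Longrightarrow>
        SApp t (SS (SApp (BR t) (SLast (BR t)))) \<in> D \<Longrightarrow>
        \<delta> (SApp (BR t) (SLast (BR t))) < \<infinity> \<Longrightarrow>
        \<delta> (SApp t (SS (SApp (BR t) (SLast (BR t))))) = \<infinity>"
  using dg[unfolded diagram_def, THEN conjunct2, THEN conjunct2, THEN conjunct2, THEN conjunct2, THEN conjunct2, THEN conjunct2, THEN conjunct2, THEN conjunct2, THEN conjunct2, THEN conjunct2, THEN conjunct2, THEN conjunct2, THEN conjunct2, THEN conjunct2, THEN conjunct2, THEN conjunct2, THEN conjunct2, THEN conjunct1] by blast
lemma LA1: "a \<in> D \<Longrightarrow> SApp (BL t) a \<in> D \<Longrightarrow> SApp t (SApp (BL t) a) \<in> D \<Longrightarrow>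
        \<delta> (SApp (BL t) a) < \<infinity> \<Longrightarrow> \<delta> a \<le> \<delta> (SApp t (SApp (BL t) a))"
  using dg[unfolded diagram_def, THEN conjunct2, THEN conjunct2, THEN conjunct2, THEN conjunct2, THEN conjunct2, THEN conjunct2, THEN conjunct2, THEN conjunct2, THEN conjunct2, THEN conjunct2, THEN conjunct2, THEN conjunct2, THEN conjunct2, THEN conjunct2, THEN conjunct2, THEN conjunct2, THEN conjunct2, THEN conjunct2, THEN conjunct1] by blast
lemma LA2: "a \<in> D \<Longrightarrow> SApp (BL t) a \<in> D \<Longrightarrow> SApp t (SP (SApp (BL t) a)) \<in> D \<Longrightarrow>
        0 < \<delta> a \<Longrightarrow> \<delta> a < \<infinity> \<Longrightarrow> \<delta> (SApp (BL t) a) < \<infinity> \<Longrightarrow>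
        \<delta> (SApp t (SP (SApp (BL t) a))) < \<delta> a"
  using dg[unfolded diagram_def, THEN conjunct2, THEN conjunct2, THEN conjunct2, THEN conjunct2, THEN conjunct2, THEN conjunct2, THEN conjunct2, THEN conjunct2, THEN conjunct2, THEN conjunct2, THEN conjunct2, THEN conjunct2, THEN conjunct2, THEN conjunct2, THEN conjunct2, THEN conjunct2, THEN conjunct2, THEN conjunct2, THEN conjunct2, THEN conjunct1] by blast
lemma LA3: "a \<in> D \<Longrightarrow> SApp (BL t) a \<in> D \<Longrightarrow> SApp t (SApp (BL t) a) \<in> D \<Longrightarrow>
        \<delta> a < \<infinity> \<Longrightarrow> \<delta> (SApp (BL t) a) = \<infinity> \<Longrightarrow> \<delta> (SApp t (SApp (BL t) a)) < \<delta> a"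
  using dg[unfolded diagram_def, THEN conjunct2, THEN conjunct2, THEN conjunct2, THEN conjunct2, THEN conjunct2, THEN conjunct2, THEN conjunct2, THEN conjunct2, THEN conjunct2, THEN conjunct2, THEN conjunct2, THEN conjunct2, THEN conjunct2, THEN conjunct2, THEN conjunct2, THEN conjunct2, THEN conjunct2, THEN conjunct2, THEN conjunct2, THEN conjunct2, THEN conjunct1] by blast
lemma LA4: "SApp (BL t) (SLast (BL t)) \<in> D \<Longrightarrow> SLast (BL t) \<in> D \<Longrightarrow> SLast t \<in> D \<Longrightarrow>
        \<delta> (SLast (BL t)) = \<infinity> \<Longrightarrow> \<delta> (SLast t) = \<infinity>"
  using dg[unfolded diagram_def, THEN conjunct2, THEN conjunct2, THEN conjunct2, THEN conjunct2, THEN conjunct2, THEN conjunct2, THEN conjunct2, THEN conjunct2, THEN conjunct2, THEN conjunct2, THEN conjunct2, THEN conjunct2, THEN conjunct2, THEN conjunct2, THEN conjunct2, THEN conjunct2, THEN conjunct2, THEN conjunct2, THEN conjunct2, THEN conjunct2, THEN conjunct2, THEN conjunct1] by blast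
lemma LA5: "SApp (BL t) (SLast (BL t)) \<in> D \<Longrightarrow> SApp t (SApp (BL t) (SLast (BL t))) \<in> D \<Longrightarrow>
        \<delta> (SApp (BL t) (SLast (BL t))) < \<infinity> \<Longrightarrow>
        \<delta> (SApp t (SApp (BL t) (SLast (BL t)))) = \<infinity>"
  using dg[unfolded diagram_def, THEN conjunct2, THEN conjunct2, THEN conjunct2, THEN conjunct2, THEN conjunct2, THEN conjunct2, THEN conjunct2, THEN conjunct2, THEN conjunct2, THEN conjunct2, THEN conjunct2, THEN conjunct2, THEN conjunct2, THEN conjunct2, THEN conjunct2, THEN conjunct2, THEN conjunct2, THEN conjunct2, THEN conjunct2, THEN conjunct2, THEN conjunct2, THEN conjunct2] by blast

end


lemma zero_or_inf: "(x::enat) \<in> {0, \<infinity>} \<Longrightarrow> x \<noteq> \<infinity> \<Longrightarrow> x = 0" by (simp del: not_infinity_eq)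


context dsetup begin

lemma case_R:
  assumes tw: "time_warp f"
    and ext: "\<forall>a. SApp t a \<in> D \<longrightarrow> f (\<delta> a) = \<delta> (SApp t a)"
    and str: "(\<exists>a. SApp t a \<in> D) \<longrightarrow> \<delta> (SLast t) = \<infinity> \<longrightarrow> lastw f = \<infinity>"
  shows "(\<forall>a. SApp (BR t) a \<in> D \<longrightarrow> radj f (\<delta> a) = \<delta> (SApp (BR t) a)) \<and>
    ((\<exists>a. SApp (BR t) a \<in> D) \<longrightarrow> \<delta> (SLast (BR t)) = \<infinity> \<longrightarrow> lastw (radj f) = \<infinity>)"
proof -
  let ?g = "radj f"
  have twg: "time_warp ?g" unfolding radj_def by (rule tw_lres)
  have fin: "?g (\<delta> a) = \<delta> (SApp (BR t) a)" if aD: "SApp (BR t) a \<in> D" and pf: "\<delta> a < \<infinity>" for a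
  proof (cases "\<delta> a = 0")
    case True
    then show ?thesis using S2[OF sat_arg[OF aD] aD] tw_0[OF twg] by simp
  next
    case False
    then have p0: "0 < \<delta> a" by (simp add: zero_less_iff_neq_zero)
    have a: "a \<in> D" using sat_arg[OF aD] .
    have m1: "SApp t (SApp (BR t) a) \<in> D" using sat_R1[OF aD] .
    have h1: "f (\<delta> (SApp (BR t) a)) \<le> \<delta> a"
      using ext m1 R1[OF a m1] by simp
    have lo: "\<delta> (SApp (BR t) a) \<le> ?g (\<delta> a)" using R_G2[OF tw p0 pf h1] .
    show ?thesis
    proof (cases "\<delta> (SApp (BR t) a)")
      case infinity
      then show ?thesis using lo by simp
    next
      case (enat k)
      have m2: "SApp t (SS (SApp (BR t) a)) \<in> D" using sat_R2[OF aD] .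
      have ss: "\<delta> (SS (SApp (BR t) a)) = enat (Suc k)"
        using S4[OF aD sat_arg[OF m2]] enat by (simp add: oplus1_def eSuc_enat[symmetric] eSuc_plus_1)
      have fe: "f (enat (Suc k)) = \<delta> (SApp t (SS (SApp (BR t) a)))" using ext m2 ss by metis
      have h2: "\<delta> a < f (enat (Suc k))"
        using R2[OF a aD m2 p0 pf] enat fe by simp
      have up: "?g (\<delta> a) \<le> enat k"
      proof (rule ccontr)
        assume "\<not> ?g (\<delta> a) \<le> enat k"
        then have "enat (Suc k) \<le> ?g (\<delta> a)" using ileI1[of "enat k"] by (simp add: eSuc_enat)
        then have "f (enat (Suc k)) \<le> \<delta> a" using tw_mono[OF tw] R_G1[OF tw, of "\<delta> a"] order.trans by blast
        with h2 show False by simp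
      qed
      show ?thesis using lo up enat by simp
    qed
  qed
  have strong: "\<delta> (SLast t) = \<infinity> \<Longrightarrow> f \<infinity> = \<infinity> \<and> (\<forall>n. f (enat n) < \<infinity>)" if "SApp (BR t) b \<in> D" for b
    using str sat_R1[OF that] lastw_inf_D[OF tw] by blast
  have ginf: "?g \<infinity> = \<infinity> \<and> (\<forall>n. ?g (enat n) < \<infinity>)" if ff1: "f \<infinity> = \<infinity>" and ff2: "\<forall>n. f (enat n) < \<infinity>"
  proof
    show "\<forall>n. ?g (enat n) < \<infinity>"
    proof
      fix n
      show "?g (enat n) < \<infinity>"
      proof (rule ccontr)
        assume "\<not> ?g (enat n) < \<infinity>"
        then have "?g (enat n) = \<infinity>" by simp
        then show False using R_G1[OF tw, of "enat n"] ff1 by simp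
      qed
    qed
    show "?g \<infinity> = \<infinity>"
    proof (rule enat_all_le_inf)
      fix q
      obtain c where c: "f (enat q) = enat c" using ff2 by auto
      have "enat q \<le> ?g (enat (Suc c))"
        by (rule R_G2[OF tw]) (auto simp: c zero_enat_def)
      also have "\<dots> \<le> ?g \<infinity>" by (rule tw_mono[OF twg]) simp
      finally show "enat q \<le> ?g \<infinity>" .
    qed
  qed
  show ?thesis
  proof (intro conjI allI impI)
    fix a assume aD: "SApp (BR t) a \<in> D"
    show "?g (\<delta> a) = \<delta> (SApp (BR t) a)"
    proof (cases "\<delta> a < \<infinity>")
      case True then show ?thesis using fin aD by blast
    next
      case False
      then have ainf: "\<delta> a = \<infinity>" by simp
      have lD: "SApp (BR t) (SLast (BR t)) \<in> D" using sat_last[OF aD] .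
      have lD': "SLast (BR t) \<in> D" using sat_arg[OF lD] .
      have eq: "\<delta> (SApp (BR t) a) = \<delta> (SApp (BR t) (SLast (BR t)))"
        using S5[OF sat_arg[OF aD] aD lD' lD] ainf by simp
      have m1: "SApp t (SApp (BR t) (SLast (BR t))) \<in> D" using sat_R1[OF lD] .
      have m2: "SApp t (SS (SApp (BR t) (SLast (BR t)))) \<in> D" using sat_R2[OF lD] .
      show ?thesis
      proof (cases "\<delta> (SLast (BR t)) = \<infinity>")
        case True
        have "\<delta> (SLast t) = \<infinity>" using R3[OF lD lD' sat_last'[OF m1] True] .
        then have ff: "f \<infinity> = \<infinity>" "\<forall>n. f (enat n) < \<infinity>" using strong[OF aD] by auto
        have x: "\<delta> (SApp (BR t) (SLast (BR t))) = \<infinity>"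
        proof (rule ccontr)
          assume "\<delta> (SApp (BR t) (SLast (BR t))) \<noteq> \<infinity>"
          then obtain k where k: "\<delta> (SApp (BR t) (SLast (BR t))) = enat k" by auto
          have "\<delta> (SApp t (SS (SApp (BR t) (SLast (BR t))))) = \<infinity>" using R4[OF lD m2] k by simp
          moreover have "\<delta> (SS (SApp (BR t) (SLast (BR t)))) = enat (Suc k)"
            using S4[OF lD sat_arg[OF m2]] k by (simp add: oplus1_def eSuc_enat[symmetric] eSuc_plus_1)
          ultimately have "f (enat (Suc k)) = \<infinity>" using ext m2 by metis
          with ff(2) show False by (metis enat_ord_code(4) less_irrefl)
        qed
        show ?thesis using ginf[OF ff] ainf eq x by simp
      next
        case False
        then have Lf: "\<delta> (SLast (BR t)) < \<infinity>" by simp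
        have gl: "?g (\<delta> (SLast (BR t))) = \<delta> (SApp (BR t) (SLast (BR t)))" using fin[OF lD Lf] .
        have ge: "\<delta> (SApp (BR t) (SLast (BR t))) \<le> ?g \<infinity>"
          using gl tw_mono[OF twg, of "\<delta> (SLast (BR t))" \<infinity>] by simp
        show ?thesis
        proof (cases "\<delta> (SApp (BR t) (SLast (BR t)))")
          case infinity
          then show ?thesis using ge ainf eq by simp
        next
          case (enat k)
          have "\<delta> (SApp t (SS (SApp (BR t) (SLast (BR t))))) = \<infinity>" using R4[OF lD m2] enat by simp
          moreover have "\<delta> (SS (SApp (BR t) (SLast (BR t)))) = enat (Suc k)"
            using S4[OF lD sat_arg[OF m2]] enat by (simp add: oplus1_def eSuc_enat[symmetric] eSuc_plus_1)
          ultimately have fk: "f (enat (Suc k)) = \<infinity>" using ext m2 by metis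
          have "?g (enat n) \<le> enat k" for n
          proof (rule ccontr)
            assume "\<not> ?g (enat n) \<le> enat k"
            then have "enat (Suc k) \<le> ?g (enat n)" using ileI1[of "enat k"] by (simp add: eSuc_enat)
            then have "f (enat (Suc k)) \<le> enat n" using tw_mono[OF tw] R_G1[OF tw, of "enat n"] order.trans by blast
            with fk show False by simp
          qed
          then have "?g \<infinity> \<le> enat k" using tw_inf[OF twg] by (simp add: SUP_least)
          then show ?thesis using ge ainf eq enat by simp
        qed
      qed
    qed
  next
    assume "\<exists>a. SApp (BR t) a \<in> D" and L: "\<delta> (SLast (BR t)) = \<infinity>"
    then obtain a where aD: "SApp (BR t) a \<in> D" by blast
    have lD: "SApp (BR t) (SLast (BR t)) \<in> D" using sat_last[OF aD] .
    have "\<delta> (SLast t) = \<infinity>" using R3[OF lD sat_arg[OF lD] sat_last'[OF sat_R1[OF lD]] L] .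
    then have ff: "f \<infinity> = \<infinity>" "\<forall>n. f (enat n) < \<infinity>" using strong[OF aD] by auto
    show "lastw ?g = \<infinity>" using ginf[OF ff] by (intro lastw_inf_I) simp
  qed
qed

lemma case_L:
  assumes tw: "time_warp f"
    and ext: "\<forall>a. SApp t a \<in> D \<longrightarrow> f (\<delta> a) = \<delta> (SApp t a)"
    and str: "(\<exists>a. SApp t a \<in> D) \<longrightarrow> \<delta> (SLast t) = \<infinity> \<longrightarrow> lastw f = \<infinity>"
  shows "(\<forall>a. SApp (BL t) a \<in> D \<longrightarrow> ladj f (\<delta> a) = \<delta> (SApp (BL t) a)) \<and>
    ((\<exists>a. SApp (BL t) a \<in> D) \<longrightarrow> \<delta> (SLast (BL t)) = \<infinity> \<longrightarrow> lastw (ladj f) = \<infinity>)"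
proof -
  let ?g = "ladj f"
  have twg: "time_warp ?g" unfolding ladj_def by (rule tw_rres)
  have fin: "?g (\<delta> a) = \<delta> (SApp (BL t) a)" if aD: "SApp (BL t) a \<in> D" and pf: "\<delta> a < \<infinity>" for a
  proof (cases "\<delta> a = 0")
    case True
    then show ?thesis using S2[OF sat_arg[OF aD] aD] tw_0[OF twg] by simp
  next
    case False
    then have p0: "0 < \<delta> a" by (simp add: zero_less_iff_neq_zero)
    have a: "a \<in> D" using sat_arg[OF aD] .
    have m1: "SApp t (SApp (BL t) a) \<in> D" using sat_L1[OF aD] .
    have fx: "f (\<delta> (SApp (BL t) a)) = \<delta> (SApp t (SApp (BL t) a))" using ext m1 by simp
    show ?thesis
    proof (cases "\<delta> (SApp (BL t) a)")
      case infinity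
      have "f \<infinity> < \<delta> a" using LA3[OF a aD m1 pf] infinity fx by simp
      then have "\<infinity> \<le> ?g (\<delta> a)"
        by (intro L_G2[OF tw p0 pf]) (metis tw_mono[OF tw] enat_ord_code(3) leD order.strict_trans1)
      then show ?thesis using infinity by simp
    next
      case (enat k)
      have h1: "\<delta> a \<le> f (enat k)" using LA1[OF a aD m1] enat fx by simp
      have up: "?g (\<delta> a) \<le> enat k"
        using tw_mono[OF twg h1] L_G1[of f "enat k"] by simp
      show ?thesis
      proof (cases k)
        case 0
        then show ?thesis using h1 p0 tw_0[OF tw] by (simp add: zero_enat_def)
      next
        case (Suc j)
        have m2: "SApp t (SP (SApp (BL t) a)) \<in> D" using sat_L2[OF aD] .
        have sp: "\<delta> (SP (SApp (BL t) a)) = enat j"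
          using S3[OF aD sat_arg[OF m2]] enat Suc by (simp add: ominus1_def one_enat_def zero_enat_def)
        have fe: "f (enat j) = \<delta> (SApp t (SP (SApp (BL t) a)))" using ext m2 sp by metis
        have h2: "f (enat j) < \<delta> a" using LA2[OF a aD m2 p0 pf] enat fe by simp
        have lo: "enat k \<le> ?g (\<delta> a)"
        proof (rule L_G2[OF tw p0 pf])
          fix s assume s: "\<delta> a \<le> f s"
          show "enat k \<le> s"
          proof (rule ccontr)
            assume "\<not> enat k \<le> s"
            then have "s \<le> enat j" using Suc by (cases s) auto
            then have "f s \<le> f (enat j)" by (rule tw_mono[OF tw])
            with s h2 show False by simp
          qed
        qed
        show ?thesis using lo up enat by simp
      qed
    qed
  qed
  have strong: "\<delta> (SLast t) = \<infinity> \<Longrightarrow> f \<infinity> = \<infinity> \<and> (\<forall>n. f (enat n) < \<infinity>)" if "SApp (BL t) b \<in> D" for b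
    using str sat_L1[OF that] lastw_inf_D[OF tw] by blast
  have ginf: "?g \<infinity> = \<infinity> \<and> (\<forall>n. ?g (enat n) < \<infinity>)" if ff1: "f \<infinity> = \<infinity>" and ff2: "\<forall>n. f (enat n) < \<infinity>"
  proof
    show "\<forall>n. ?g (enat n) < \<infinity>"
    proof
      fix n
      obtain q where q: "enat n < f (enat q)" using tw_unbounded[OF tw ff1] by blast
      have "?g (enat n) \<le> ?g (f (enat q))" using q by (intro tw_mono[OF twg]) simp
      also have "\<dots> \<le> enat q" by (rule L_G1)
      finally show "?g (enat n) < \<infinity>" using enat_ile by fastforce
    qed
    show "?g \<infinity> = \<infinity>"
    proof (rule enat_all_le_inf)
      fix q
      obtain c where c: "f (enat q) = enat c" using ff2 by auto
      have "enat q \<le> enat (Suc q)" by simp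
      also have "enat (Suc q) \<le> ?g (enat (Suc c))"
      proof (rule L_G2[OF tw])
        fix s assume s: "enat (Suc c) \<le> f s"
        show "enat (Suc q) \<le> s"
        proof (rule ccontr)
          assume "\<not> enat (Suc q) \<le> s"
          then have "s \<le> enat q" by (cases s) auto
          then have "f s \<le> enat c" using tw_mono[OF tw] c by metis
          with s show False using order.trans[of "enat (Suc c)" "f s" "enat c"] by simp
        qed
      qed (auto simp: zero_enat_def)
      also have "\<dots> \<le> ?g \<infinity>" by (rule tw_mono[OF twg]) simp
      finally show "enat q \<le> ?g \<infinity>" .
    qed
  qed
  show ?thesis
  proof (intro conjI allI impI)
    fix a assume aD: "SApp (BL t) a \<in> D"
    show "?g (\<delta> a) = \<delta> (SApp (BL t) a)"
    proof (cases "\<delta> a < \<infinity>")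
      case True then show ?thesis using fin aD by blast
    next
      case False
      then have ainf: "\<delta> a = \<infinity>" by simp
      have lD: "SApp (BL t) (SLast (BL t)) \<in> D" using sat_last[OF aD] .
      have lD': "SLast (BL t) \<in> D" using sat_arg[OF lD] .
      have eq: "\<delta> (SApp (BL t) a) = \<delta> (SApp (BL t) (SLast (BL t)))"
        using S5[OF sat_arg[OF aD] aD lD' lD] ainf by simp
      have m1: "SApp t (SApp (BL t) (SLast (BL t))) \<in> D" using sat_L1[OF lD] .
      have fx: "f (\<delta> (SApp (BL t) (SLast (BL t)))) = \<delta> (SApp t (SApp (BL t) (SLast (BL t))))"
        using ext m1 by simp
      show ?thesis
      proof (cases "\<delta> (SLast (BL t)) = \<infinity>")
        case True
        have "\<delta> (SLast t) = \<infinity>" using LA4[OF lD lD' sat_last'[OF m1] True] .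
        then have ff: "f \<infinity> = \<infinity>" "\<forall>n. f (enat n) < \<infinity>" using strong[OF aD] by auto
        have x: "\<delta> (SApp (BL t) (SLast (BL t))) = \<infinity>"
        proof (rule ccontr)
          assume "\<delta> (SApp (BL t) (SLast (BL t))) \<noteq> \<infinity>"
          then obtain k where k: "\<delta> (SApp (BL t) (SLast (BL t))) = enat k" by auto
          have "f (enat k) = \<infinity>" using LA5[OF lD m1] k fx by simp
          with ff(2) show False by (metis less_irrefl)
        qed
        show ?thesis using ginf[OF ff] ainf eq x by simp
      next
        case False
        then have Lf: "\<delta> (SLast (BL t)) < \<infinity>" by simp
        have gl: "?g (\<delta> (SLast (BL t))) = \<delta> (SApp (BL t) (SLast (BL t)))" using fin[OF lD Lf] .
        have ge: "\<delta> (SApp (BL t) (SLast (BL t))) \<le> ?g \<infinity>"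
          using gl tw_mono[OF twg, of "\<delta> (SLast (BL t))" \<infinity>] by simp
        show ?thesis
        proof (cases "\<delta> (SApp (BL t) (SLast (BL t)))")
          case infinity
          then show ?thesis using ge ainf eq by simp
        next
          case (enat k)
          have "f (enat k) = \<infinity>" using LA5[OF lD m1] enat fx by simp
          then have "?g \<infinity> \<le> enat k" using L_G1[of f "enat k"] by simp
          then show ?thesis using ge ainf eq enat by simp
        qed
      qed
    qed
  next
    assume "\<exists>a. SApp (BL t) a \<in> D" and L: "\<delta> (SLast (BL t)) = \<infinity>"
    then obtain a where aD: "SApp (BL t) a \<in> D" by blast
    have lD: "SApp (BL t) (SLast (BL t)) \<in> D" using sat_last[OF aD] .
    have "\<delta> (SLast t) = \<infinity>" using LA4[OF lD sat_arg[OF lD] sat_last'[OF sat_L1[OF lD]] L] .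
    then have ff: "f \<infinity> = \<infinity>" "\<forall>n. f (enat n) < \<infinity>" using strong[OF aD] by auto
    show "lastw ?g = \<infinity>" using ginf[OF ff] by (intro lastw_inf_I) simp
  qed
qed

lemma case_O:
  assumes tw: "time_warp f"
    and ext: "\<forall>a. SApp t a \<in> D \<longrightarrow> f (\<delta> a) = \<delta> (SApp t a)"
    and str: "(\<exists>a. SApp t a \<in> D) \<longrightarrow> \<delta> (SLast t) = \<infinity> \<longrightarrow> lastw f = \<infinity>"
  shows "(\<forall>a. SApp (BO t) a \<in> D \<longrightarrow> ores f (\<delta> a) = \<delta> (SApp (BO t) a)) \<and>
    ((\<exists>a. SApp (BO t) a \<in> D) \<longrightarrow> \<delta> (SLast (BO t)) = \<infinity> \<longrightarrow> lastw (ores f) = \<infinity>)"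
proof -
  let ?g = "ores f"
  have twg: "time_warp ?g" unfolding ores_def by (rule tw_lres)
  have fin: "?g (\<delta> a) = \<delta> (SApp (BO t) a)" if aD: "SApp (BO t) a \<in> D" and pf: "\<delta> a < \<infinity>" for a
  proof -
    have a: "a \<in> D" using sat_arg[OF aD] .
    have tD: "SApp t a \<in> D" using sat_O[OF aD] .
    have o2: "\<delta> (SApp (BO t) a) = \<infinity> \<longleftrightarrow> f (\<delta> a) = \<infinity>" using O2[OF a aD tD pf] ext tD by simp
    show ?thesis
    proof (cases "\<delta> (SApp (BO t) a) = \<infinity>")
      case True
      then show ?thesis using O_G2[OF tw pf] o2 by simp
    next
      case False
      then have "\<delta> (SApp (BO t) a) = 0" by (rule zero_or_inf[OF O1[OF aD]])
      moreover have "?g (\<delta> a) = 0"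
      proof (rule ccontr)
        assume "?g (\<delta> a) \<noteq> 0"
        then have "f (\<delta> a) = \<infinity>" by (rule O_G1[OF tw])
        with o2 False show False by simp
      qed
      ultimately show ?thesis by simp
    qed
  qed
  show ?thesis
  proof (intro conjI allI impI)
    fix a assume aD: "SApp (BO t) a \<in> D"
    show "?g (\<delta> a) = \<delta> (SApp (BO t) a)"
    proof (cases "\<delta> a < \<infinity>")
      case True then show ?thesis using fin aD by blast
    next
      case False
      then have ainf: "\<delta> a = \<infinity>" by simp
      have lD: "SApp (BO t) (SLast (BO t)) \<in> D" using sat_last[OF aD] .
      have lD': "SLast (BO t) \<in> D" using sat_arg[OF lD] .
      have eq: "\<delta> (SApp (BO t) a) = \<delta> (SApp (BO t) (SLast (BO t)))"
        using S5[OF sat_arg[OF aD] aD lD' lD] ainf by simp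
      have Lf: "\<delta> (SLast (BO t)) < \<infinity>" using O3[OF lD'] .
      have gl: "?g (\<delta> (SLast (BO t))) = \<delta> (SApp (BO t) (SLast (BO t)))" using fin[OF lD Lf] .
      have ge: "\<delta> (SApp (BO t) (SLast (BO t))) \<le> ?g \<infinity>"
        using gl tw_mono[OF twg, of "\<delta> (SLast (BO t))" \<infinity>] by simp
      show ?thesis
      proof (cases "\<delta> (SApp (BO t) (SLast (BO t))) = \<infinity>")
        case True
        then show ?thesis using ge ainf eq by simp
      next
        case False
        then have x0: "\<delta> (SApp (BO t) (SLast (BO t))) = 0" by (rule zero_or_inf[OF O1[OF lD]])
        have tD: "SApp t a \<in> D" using sat_O[OF aD] .
        have fn: "f (enat n) < \<infinity>" for n
        proof (cases "\<delta> (SLast t) = \<infinity>")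
          case True
          then have "lastw f = \<infinity>" using str tD by blast
          then show ?thesis using lastw_inf_D[OF tw] by blast
        next
          case False
          have tl: "SApp t (SLast t) \<in> D" using sat_last[OF tD] .
          have tl': "SLast t \<in> D" using sat_arg[OF tl] .
          have "\<delta> (SApp t a) = \<delta> (SApp t (SLast t))"
            using S5[OF sat_arg[OF tD] tD tl' tl] ainf by simp
          moreover have "\<delta> (SApp t (SLast t)) < \<infinity>"
            using O4[OF tl' tl lD] x0 False by simp
          moreover have "f (\<delta> a) = \<delta> (SApp t a)" using ext tD by blast
          ultimately have "f \<infinity> < \<infinity>" using ainf by simp
          moreover have "f (enat n) \<le> f \<infinity>" by (rule tw_mono[OF tw]) simp
          ultimately show ?thesis using le_less_trans by blast
        qed
        have g0: "?g (enat n) = 0" for n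
        proof (rule ccontr)
          assume "?g (enat n) \<noteq> 0"
          then have "f (enat n) = \<infinity>" by (rule O_G1[OF tw])
          with fn[of n] show False by simp
        qed
        have "?g \<infinity> = 0" unfolding tw_inf[OF twg] g0 by simp
        then show ?thesis using x0 eq ainf by simp
      qed
    qed
  next
    assume "\<exists>a. SApp (BO t) a \<in> D" and L: "\<delta> (SLast (BO t)) = \<infinity>"
    then obtain a where aD: "SApp (BO t) a \<in> D" by blast
    then show "lastw ?g = \<infinity>" using O3[OF sat_last'[OF aD]] L by simp
  qed
qed

lemma case_C:
  assumes twg: "time_warp g"
    and extg: "\<forall>a. SApp t a \<in> D \<longrightarrow> g (\<delta> a) = \<delta> (SApp t a)"
    and strg: "(\<exists>a. SApp t a \<in> D) \<longrightarrow> \<delta> (SLast t) = \<infinity> \<longrightarrow> lastw g = \<infinity>"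
    and twh: "time_warp h"
    and exth: "\<forall>a. SApp u a \<in> D \<longrightarrow> h (\<delta> a) = \<delta> (SApp u a)"
    and strh: "(\<exists>a. SApp u a \<in> D) \<longrightarrow> \<delta> (SLast u) = \<infinity> \<longrightarrow> lastw h = \<infinity>"
  shows "(\<forall>a. SApp (BComp t u) a \<in> D \<longrightarrow> (g \<circ> h) (\<delta> a) = \<delta> (SApp (BComp t u) a)) \<and>
    ((\<exists>a. SApp (BComp t u) a \<in> D) \<longrightarrow> \<delta> (SLast (BComp t u)) = \<infinity> \<longrightarrow> lastw (g \<circ> h) = \<infinity>)"
proof (intro conjI allI impI)
  fix a assume aD: "SApp (BComp t u) a \<in> D"
  have m: "SApp t (SApp u a) \<in> D" using sat_comp[OF aD] .
  have m2: "SApp u a \<in> D" using sat_arg[OF m] .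
  show "(g \<circ> h) (\<delta> a) = \<delta> (SApp (BComp t u) a)"
    using L3[OF aD m] extg exth m m2 by simp
next
  assume "\<exists>a. SApp (BComp t u) a \<in> D" and L: "\<delta> (SLast (BComp t u)) = \<infinity>"
  then obtain a where aD: "SApp (BComp t u) a \<in> D" by blast
  have m: "SApp t (SApp u a) \<in> D" using sat_comp[OF aD] .
  have m2: "SApp u a \<in> D" using sat_arg[OF m] .
  have lD: "SApp (BComp t u) (SLast (BComp t u)) \<in> D" using sat_last[OF aD] .
  have both: "\<delta> (SLast t) = \<infinity> \<and> \<delta> (SLast u) = \<infinity>"
    using L4[OF lD sat_arg[OF lD] sat_last'[OF m] sat_last'[OF m2] L] .
  then have lg: "lastw g = \<infinity>" and lh: "lastw h = \<infinity>" using strg strh m m2 by blast+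
  show "lastw (g \<circ> h) = \<infinity>"
  proof (rule lastw_inf_I)
    fix n
    obtain c where c: "h (enat n) = enat c" using lastw_inf_D(2)[OF twh lh, of n] by auto
    show "(g \<circ> h) (enat n) < (g \<circ> h) \<infinity>"
      using lastw_inf_D[OF twg lg] lastw_inf_D(1)[OF twh lh] c by simp
  qed
qed

lemma case_Id:
  "(\<forall>a. SApp BId a \<in> D \<longrightarrow> id (\<delta> a) = \<delta> (SApp BId a)) \<and>
    ((\<exists>a. SApp BId a \<in> D) \<longrightarrow> \<delta> (SLast BId) = \<infinity> \<longrightarrow> lastw id = \<infinity>)"
proof (intro conjI allI impI)
  fix a assume "SApp BId a \<in> D"
  then show "id (\<delta> a) = \<delta> (SApp BId a)" using L1[OF sat_arg] by simp
next
  show "lastw id = \<infinity>" by (rule lastw_inf_I) simp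
qed

lemma case_Bot:
  "(\<forall>a. SApp BBot a \<in> D \<longrightarrow> bot_w (\<delta> a) = \<delta> (SApp BBot a)) \<and>
    ((\<exists>a. SApp BBot a \<in> D) \<longrightarrow> \<delta> (SLast BBot) = \<infinity> \<longrightarrow> lastw bot_w = \<infinity>)"
proof (intro conjI allI impI)
  fix a assume aD: "SApp BBot a \<in> D"
  have lD: "SApp BBot (SLast BBot) \<in> D" using sat_last[OF aD] .
  have l0: "\<delta> (SLast BBot) = 0" using L2[OF aD sat_arg[OF lD]] .
  have "\<delta> (SApp BBot a) = \<delta> (SApp BBot (SLast BBot))"
    using S5[OF sat_arg[OF aD] aD sat_arg[OF lD] lD] l0 by simp
  also have "\<dots> = 0" using S2[OF sat_arg[OF lD] lD l0] .
  finally show "bot_w (\<delta> a) = \<delta> (SApp BBot a)" by (simp add: bot_w_def)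
next
  assume "\<exists>a. SApp BBot a \<in> D" and L: "\<delta> (SLast BBot) = \<infinity>"
  then obtain a where aD: "SApp BBot a \<in> D" by blast
  have lD: "SApp BBot (SLast BBot) \<in> D" using sat_last[OF aD] .
  have l0: "\<delta> (SLast BBot) = 0" using L2[OF aD sat_arg[OF lD]] .
  with L show "lastw bot_w = \<infinity>" by (simp add: zero_enat_def)
qed

lemma main:
  assumes "\<forall>x. strongly_extends (\<theta> x) D \<delta> (BVar x)"
  shows "strongly_extends (eval \<theta> t) D \<delta> t"
proof (induction t)
  case (BVar x)
  then show ?case using assms by simp
next
  case (BComp t u)
  have i1: "time_warp (eval \<theta> t)" "\<forall>a. SApp t a \<in> D \<longrightarrow> eval \<theta> t (\<delta> a) = \<delta> (SApp t a)"
    "(\<exists>a. SApp t a \<in> D) \<longrightarrow> \<delta> (SLast t) = \<infinity> \<longrightarrow> lastw (eval \<theta> t) = \<infinity>"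
    using BComp.IH(1) unfolding strongly_extends_iff by blast+
  have i2: "time_warp (eval \<theta> u)" "\<forall>a. SApp u a \<in> D \<longrightarrow> eval \<theta> u (\<delta> a) = \<delta> (SApp u a)"
    "(\<exists>a. SApp u a \<in> D) \<longrightarrow> \<delta> (SLast u) = \<infinity> \<longrightarrow> lastw (eval \<theta> u) = \<infinity>"
    using BComp.IH(2) unfolding strongly_extends_iff by blast+
  have tc: "time_warp (eval \<theta> t \<circ> eval \<theta> u)" using tw_comp i1(1) i2(1) by blast
  show ?case unfolding strongly_extends_iff eval.simps by (rule conjI[OF tc case_C[OF i1 i2]])
next
  case (BO t)
  have i: "time_warp (eval \<theta> t)" "\<forall>a. SApp t a \<in> D \<longrightarrow> eval \<theta> t (\<delta> a) = \<delta> (SApp t a)"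
    "(\<exists>a. SApp t a \<in> D) \<longrightarrow> \<delta> (SLast t) = \<infinity> \<longrightarrow> lastw (eval \<theta> t) = \<infinity>"
    using BO.IH unfolding strongly_extends_iff by blast+
  have tc: "time_warp (ores (eval \<theta> t))" unfolding ores_def by (rule tw_lres)
  show ?case unfolding strongly_extends_iff eval.simps by (rule conjI[OF tc case_O[OF i]])
next
  case (BL t)
  have i: "time_warp (eval \<theta> t)" "\<forall>a. SApp t a \<in> D \<longrightarrow> eval \<theta> t (\<delta> a) = \<delta> (SApp t a)"
    "(\<exists>a. SApp t a \<in> D) \<longrightarrow> \<delta> (SLast t) = \<infinity> \<longrightarrow> lastw (eval \<theta> t) = \<infinity>"
    using BL.IH unfolding strongly_extends_iff by blast+
  have tc: "time_warp (ladj (eval \<theta> t))" unfolding ladj_def by (rule tw_rres)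
  show ?case unfolding strongly_extends_iff eval.simps by (rule conjI[OF tc case_L[OF i]])
next
  case (BR t)
  have i: "time_warp (eval \<theta> t)" "\<forall>a. SApp t a \<in> D \<longrightarrow> eval \<theta> t (\<delta> a) = \<delta> (SApp t a)"
    "(\<exists>a. SApp t a \<in> D) \<longrightarrow> \<delta> (SLast t) = \<infinity> \<longrightarrow> lastw (eval \<theta> t) = \<infinity>"
    using BR.IH unfolding strongly_extends_iff by blast+
  have tc: "time_warp (radj (eval \<theta> t))" unfolding radj_def by (rule tw_lres)
  show ?case unfolding strongly_extends_iff eval.simps by (rule conjI[OF tc case_R[OF i]])
next
  case BId
  show ?case unfolding strongly_extends_iff eval.simps by (rule conjI[OF tw_id case_Id])
next
  case BBot
  show ?case unfolding strongly_extends_iff eval.simps by (rule conjI[OF tw_bot case_Bot])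
qed

end


theorem lemma3p17:
  fixes D :: "('k, 'v) sample set"
    and \<delta> :: "('k, 'v) sample \<Rightarrow> enat"
    and \<theta> :: "'v \<Rightarrow> (enat \<Rightarrow> enat)"
    and t :: "'v bterm"
  assumes "saturated D"
    and "\<forall>x. \<theta> x \<in> W"
    and "diagram D \<delta>"
    and "\<forall>x. strongly_extends (\<theta> x) D \<delta> (BVar x)"
  shows "strongly_extends (eval \<theta> t) D \<delta> t"
proof -
  interpret dsetup D \<delta> using assms(1,3) by unfold_locales
  show ?thesis using main assms(4) by blast
qed

end
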